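(* Let $k$ be an algebraically closed field and let $A$ be a finite dimensional $k$-algebra. If $A$ does not have a non-trivial grading, then $A$ is a basic algebra.
   Context: A grading on $A$ is a decomposition $A=\bigoplus_{i\in\mathbb{Z}}A_i$ into subspaces with $A_iA_j\subseteq A_{i+j}$ for all $i,j\in\mathbb{Z}$. The trivial grading is $A_0=A$ (all other components zero); a grading is non-trivial if $A_i\neq 0$ for some $i\neq 0$. Here "$A$ has a non-trivial grading" means there is a non-trivial grading on an algebra isomorphic to $A$. *)

theory Defs
  imports Main "HOL-Computational_Algebra.Polynomial"
begin

definition alg_closed_field :: "'k::field itself \<Rightarrow> bool" where
  "alg_closed_field _ \<longleftrightarrow> (\<forall>p :: 'k poly. degree p \<ge> 1 \<longrightarrow> (\<exists>x. poly p x = 0))"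

definition k_algebra :: "('k::field \<Rightarrow> 'a::ring_1 \<Rightarrow> 'a) \<Rightarrow> bool" where
  "k_algebra scale \<longleftrightarrow> vector_space scale \<and>
     (\<forall>c x y. scale c (x * y) = scale c x * y \<and> scale c (x * y) = x * scale c y)"

definition fin_dim_k_algebra :: "('k::field \<Rightarrow> 'a::ring_1 \<Rightarrow> 'a) \<Rightarrow> bool" where
  "fin_dim_k_algebra scale \<longleftrightarrow> k_algebra scale \<and>
     (\<exists>B. finite B \<and> module.span scale B = UNIV)"

definition is_grading :: "('k::field \<Rightarrow> 'a::ring_1 \<Rightarrow> 'a) \<Rightarrow> (int \<Rightarrow> 'a set) \<Rightarrow> bool" where
  "is_grading scale V \<longleftrightarrow>
     (\<forall>i. module.subspace scale (V i)) \<and>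
     (\<forall>i j. \<forall>x\<in>V i. \<forall>y\<in>V j. x * y \<in> V (i + j)) \<and>
     (\<forall>x. \<exists>!f :: int \<Rightarrow> 'a. finite {i. f i \<noteq> 0} \<and> (\<forall>i. f i \<in> V i) \<and>
           x = (\<Sum>i\<in>{i. f i \<noteq> 0}. f i))"

definition has_nontrivial_grading :: "('k::field \<Rightarrow> 'a::ring_1 \<Rightarrow> 'a) \<Rightarrow> bool" where
  "has_nontrivial_grading scale \<longleftrightarrow>
     (\<exists>V. is_grading scale V \<and> (\<exists>i. i \<noteq> 0 \<and> V i \<noteq> {0}))"

definition left_ideal :: "'a::ring_1 set \<Rightarrow> bool" where
  "left_ideal I \<longleftrightarrow> 0 \<in> I \<and> (\<forall>x\<in>I. \<forall>y\<in>I. x + y \<in> I) \<and> (\<forall>a. \<forall>x\<in>I. a * x \<in> I)"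

definition maximal_left_ideal :: "'a::ring_1 set \<Rightarrow> bool" where
  "maximal_left_ideal I \<longleftrightarrow> left_ideal I \<and> I \<noteq> UNIV \<and>
     (\<forall>L. left_ideal L \<and> I \<subseteq> L \<and> L \<noteq> UNIV \<longrightarrow> L = I)"

definition jacobson_radical :: "'a::ring_1 set" where
  "jacobson_radical = \<Inter>{I. maximal_left_ideal I}"

definition k_algebra_hom_to_field :: "('k::field \<Rightarrow> 'a::ring_1 \<Rightarrow> 'a) \<Rightarrow> ('a \<Rightarrow> 'k) \<Rightarrow> bool" where
  "k_algebra_hom_to_field scale \<phi> \<longleftrightarrow>
     (\<forall>x y. \<phi> (x + y) = \<phi> x + \<phi> y) \<and> (\<forall>c x. \<phi> (scale c x) = c * \<phi> x) \<and>
     (\<forall>x y. \<phi> (x * y) = \<phi> x * \<phi> y) \<and> \<phi> 1 = 1"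

(* Basic: A / rad A \<cong> k \<times> ... \<times> k (n copies) as k-algebras, expressed as a surjective
   k-algebra homomorphism A \<rightarrow> k^n (components \<phi> 0, ..., \<phi> (n-1)) with kernel rad A. *)
definition basic_algebra :: "('k::field \<Rightarrow> 'a::ring_1 \<Rightarrow> 'a) \<Rightarrow> bool" where
  "basic_algebra scale \<longleftrightarrow>
     (\<exists>(n::nat) (\<phi> :: nat \<Rightarrow> 'a \<Rightarrow> 'k).
        (\<forall>i<n. k_algebra_hom_to_field scale (\<phi> i)) \<and>
        (\<forall>c :: nat \<Rightarrow> 'k. \<exists>x. \<forall>i<n. \<phi> i x = c i) \<and>
        {x. \<forall>i<n. \<phi> i x = 0} = jacobson_radical)"

end

theory Submission
  imports Defs "HOL-Computational_Algebra.Computational_Algebra"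
begin

locale falg = vector_space scale for scale :: "'k::field \<Rightarrow> 'a::ring_1 \<Rightarrow> 'a" +
  fixes B0 :: "'a set"
  assumes multL: "scale c (x*y) = scale c x * y"
    and multR: "scale c (x*y) = x * scale c y"
    and finB: "finite B0" and spanB: "span B0 = UNIV"
begin

definition emb :: "'k \<Rightarrow> 'a" where "emb c = scale c 1"

lemma scale_emb: "scale c x = emb c * x"
  using multL[of c 1 x] by (simp add: emb_def)
lemma scale_emb': "scale c x = x * emb c"
  using multR[of c x 1] by (simp add: emb_def)
lemma emb_comm: "emb c * x = x * emb c"
  using scale_emb scale_emb' by metis
lemma emb_add: "emb (c + d) = emb c + emb d"
  by (simp add: emb_def scale_left_distrib)
lemma emb_mult: "emb (c * d) = emb c * emb d"
  by (metis emb_def scale_emb scale_scale)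
lemma emb_0[simp]: "emb 0 = 0" by (simp add: emb_def)
lemma emb_1[simp]: "emb 1 = 1" by (simp add: emb_def)
lemma emb_minus: "emb (- c) = - emb c" by (simp add: emb_def)
lemma emb_diff: "emb (c - d) = emb c - emb d" by (simp add: emb_def scale_left_diff_distrib)

definition pev :: "'k poly \<Rightarrow> 'a \<Rightarrow> 'a" where
  "pev p y = fold_coeffs (\<lambda>a r. emb a + y * r) p 0"

lemma pev_0[simp]: "pev 0 y = 0" by (simp add: pev_def)
lemma pev_pCons[simp]: "pev (pCons a p) y = emb a + y * pev p y"
  by (cases "p = 0 \<and> a = 0") (auto simp add: pev_def)

lemma pev_add[simp]: "pev (p + q) y = pev p y + pev q y"
proof (induction p arbitrary: q)
  case (pCons a p)
  then show ?case
    by (cases q) (simp add: algebra_simps emb_add)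
qed auto

lemma pev_comm: "pev p y * y = y * pev p y"
  by (induction p) (auto simp: algebra_simps emb_comm)

lemma pev_smult[simp]: "pev (smult a p) y = emb a * pev p y"
  by (induct p) (simp_all add: emb_mult distrib_left mult.assoc[symmetric] emb_comm[of a y])

lemma pev_mult[simp]: "pev (p * q) y = pev p y * pev q y"
  by (induct p) (simp_all add: distrib_right mult.assoc)

lemma pev_const[simp]: "pev [:c:] y = emb c" by simp

lemma pev_minus[simp]: "pev (- p) y = - pev p y"
  by (metis add_eq_0_iff pev_0 pev_add)
lemma pev_diff[simp]: "pev (p - q) y = pev p y - pev q y"
  by (metis diff_conv_add_uminus pev_add pev_minus)
lemma pev_1[simp]: "pev 1 y = 1" by (simp add: one_pCons)
lemma pev_power[simp]: "pev (p ^ n) y = pev p y ^ n"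
  by (induct n) auto
lemma pev_pcomm: "pev p y * pev q y = pev q y * pev p y"
  by (metis mult.commute pev_mult)
lemma pev_monom[simp]: "pev (monom c n) y = emb c * y ^ n"
proof -
  have "monom c n = smult c ([:0,1:]^n)" by (simp add: monom_altdef)
  then show ?thesis by simp
qed
lemma pev_sum: "finite S \<Longrightarrow> pev (\<Sum>i\<in>S. f i) y = (\<Sum>i\<in>S. pev (f i) y)"
  by (induct S rule: finite_induct) auto

end


context falg
begin

lemma annihilator_exists: "\<exists>p. p \<noteq> 0 \<and> pev p y = 0"
proof -
  define N where "N = card B0"
  define S where "S = (\<lambda>i. y^i) ` {..N}"
  show ?thesis
  proof (cases "inj_on (\<lambda>i. y^i) {..N}")
    case False
    then obtain i j where ij: "i \<le> N" "j \<le> N" "i \<noteq> j" "y^i = y^j"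
      unfolding inj_on_def by auto
    let ?p = "monom (1::'k) i - monom 1 j"
    have "coeff ?p i = 1" using ij(3) by (simp only: coeff_diff coeff_monom) simp
    then have "?p \<noteq> 0" by (metis coeff_0 zero_neq_one)
    moreover have "pev ?p y = 0" using ij by simp
    ultimately show ?thesis by blast
  next
    case True
    then have cS: "card S = Suc N" unfolding S_def by (simp add: card_image)
    have "dependent S"
    proof (rule ccontr)
      assume "independent S"
      then have "card S \<le> card B0"
        using independent_span_bound[OF finB, of S] spanB by auto
      then show False using cS N_def by simp
    qed
    then obtain t u where t: "finite t" "t \<subseteq> S" "(\<Sum>v\<in>t. scale (u v) v) = 0" and
      v: "\<exists>v\<in>t. u v \<noteq> 0"
      unfolding dependent_explicit by blast
    define c where "c i = (if y^i \<in> t then u (y^i) else 0)" for i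
    define p where "p = (\<Sum>i\<le>N. monom (c i) i)"
    have "pev p y = (\<Sum>i\<le>N. scale (c i) (y^i))"
      unfolding p_def by (simp add: pev_sum scale_emb)
    also have "\<dots> = (\<Sum>v\<in>S. scale (if v \<in> t then u v else 0) v)"
      unfolding S_def by (subst sum.reindex[OF True]) (simp add: c_def)
    also have "\<dots> = (\<Sum>v\<in>t. scale (u v) v)"
      using t by (intro sum.mono_neutral_cong_right) (auto simp: S_def)
    also have "\<dots> = 0" using t by simp
    finally have pe: "pev p y = 0" .
    from v obtain v where vt: "v \<in> t" "u v \<noteq> 0" by blast
    then obtain i where i: "i \<le> N" "v = y^i" using t unfolding S_def by auto
    have "coeff p i = c i"
      unfolding p_def coeff_sum using i by (simp add: sum.delta)
    then have "p \<noteq> 0" using vt i c_def by auto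
    then show ?thesis using pe by blast
  qed
qed

end


locale corner = falg scale B0 for scale :: "'k::field \<Rightarrow> 'a::ring_1 \<Rightarrow> 'a" and B0 +
  fixes e :: 'a
  assumes ac: "alg_closed_field TYPE('k)"
    and e_idem: "e*e = e" and e_cent: "\<And>x. e*x = x*e" and e_nz: "e \<noteq> 0"
    and prim: "\<And>f. f*f = f \<Longrightarrow> e*f = f \<Longrightarrow> f = 0 \<or> f = e"
begin

lemma eR: "e*(e*x) = e*x" by (metis mult.assoc e_idem)

lemma e_pow: "(e*w)^(Suc n) = e*w^(Suc n)"
proof (induct n)
  case (Suc n)
  have "(e*w)^(Suc (Suc n)) = (e*w) * (e*w)^(Suc n)" by simp
  also have "\<dots> = e*w*(e*w^(Suc n))" using Suc by simp
  also have "\<dots> = e*(e*(w*w^(Suc n)))" by (metis e_cent mult.assoc)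
  also have "\<dots> = e*w^(Suc (Suc n))" by (simp add: eR)
  finally show ?case .
qed simp

lemma eP: "e * pev A Y * pev B Y = e * pev (A*B) Y"
  by (simp add: mult.assoc)

lemma ecomm: "e * z * w = z * (e * w)"
  by (metis e_cent mult.assoc)

lemma eigen: "\<exists>c m. (e*y - scale c e)^m = 0"
proof -
  define Y where "Y = e*y"
  obtain p0 where p0: "p0 \<noteq> 0" "pev p0 Y = 0" using annihilator_exists by blast
  have "\<exists>p. (p \<noteq> 0 \<and> e*pev p Y = 0) \<and> (\<forall>q. q \<noteq> 0 \<and> e*pev q Y = 0 \<longrightarrow> degree p \<le> degree q)"
    by (rule ex_has_least_nat[where k=p0]) (use p0 in simp)
  then obtain p where p: "p \<noteq> 0" "e*pev p Y = 0"
    and pmin: "\<And>q. q \<noteq> 0 \<Longrightarrow> e*pev q Y = 0 \<Longrightarrow> degree p \<le> degree q" by blast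
  have dp: "degree p \<ge> 1"
  proof (rule ccontr)
    assume "\<not> degree p \<ge> 1"
    then have "degree p = 0" by simp
    then have pc: "p = [:coeff p 0:]" by (rule degree_0_id[symmetric])
    define c where "c = coeff p 0"
    have c0: "c \<noteq> 0" using p pc c_def by auto
    have "e * emb c = 0" using p(2) pc c_def by (metis pev_const)
    then have "emb c * e = 0" by (simp add: emb_comm)
    then have "emb (inverse c) * (emb c * e) = 0" by simp
    then have "emb (inverse c * c) * e = 0" by (simp add: emb_mult mult.assoc)
    then show False using c0 e_nz by simp
  qed
  then obtain lam where root: "poly p lam = 0" using ac unfolding alg_closed_field_def by blast
  define L where "L = [:- lam, 1:]"
  define m where "m = order lam p"
  have m0: "m \<noteq> 0" using root p order_root m_def by blast
  obtain q where pq: "p = L^m * q" and nd: "\<not> L dvd q"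
    using order_decomp[OF p(1), of lam] unfolding L_def m_def by blast
  define c where "c = poly q lam"
  have c0: "c \<noteq> 0" using nd unfolding c_def L_def by (simp add: poly_eq_0_iff_dvd)
  have "poly (q - [:c:]) lam = 0" by (simp add: c_def)
  then have "L dvd (q - [:c:])" unfolding L_def by (simp only: poly_eq_0_iff_dvd)
  then obtain r where r: "q - [:c:] = L * r" by (elim dvdE)
  define s where "s = smult (- inverse c) r"
  have q_eq: "q = smult c (1 - L*s)"
  proof -
    have "smult c (1 - L*s) = smult c 1 - smult (c * - inverse c) (L*r)"
      by (simp add: s_def smult_diff_right smult_add_right mult_smult_right smult_minus_right)
    also have "\<dots> = [:c:] + L * r" using c0 by simp
    finally have "smult c (1 - L*s) = [:c:] + L * r" .
    then show ?thesis using r by (simp add: algebra_simps)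
  qed
  define a where "a = s^m"
  define b where "b = smult (inverse c) (\<Sum>i<m. (L*s)^i)"
  have bq: "b * q = 1 - (L*s)^m"
    using c0 one_diff_power_eq[of "L*s" m] by (simp add: b_def q_eq mult.commute)
  have bez: "a * L^m + b * q = 1"
    using bq by (simp add: a_def power_mult_distrib mult.commute)
  define u where "u = e * pev (b*q) Y"
  have sumu: "e * pev (a*L^m) Y + u = e"
  proof -
    have "e * pev (a * L^m + b*q) Y = e" using bez by simp
    then show ?thesis by (simp add: u_def distrib_left)
  qed
  have polyid: "b*q*(b*q) = b*q - (a*b)*p"
  proof -
    have "b*q*(b*q) = b*q*(a*L^m + b*q) - (a*b)*p" by (simp add: pq algebra_simps)
    then show ?thesis using bez by simp
  qed
  have uu: "u*u = u"
  proof -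
    have "u*u = e * (e * pev (b*q) Y * pev (b*q) Y)"
      unfolding u_def by (metis ecomm mult.assoc)
    also have "\<dots> = e * pev (b*q*(b*q)) Y" by (simp only: eP eR)
    also have "\<dots> = u - e * pev (a*b) Y * pev p Y" by (simp only: polyid pev_diff right_diff_distrib u_def eP)
    also have "e * pev (a*b) Y * pev p Y = pev (a*b) Y * (e * pev p Y)" by (rule ecomm)
    finally show ?thesis using p(2) by simp
  qed
  have eu: "e*u = u" by (simp add: u_def eR)
  have "u = 0 \<or> u = e" using prim[OF uu eu] .
  then have Lm: "e * pev (L^m) Y = 0"
  proof
    assume u0: "u = 0"
    then have ea: "e * pev (a*L^m) Y = e" using sumu by simp
    have "e * pev q Y = e * pev (a*L^m) Y * pev q Y" using ea by simp
    also have "\<dots> = e * pev (a * p) Y" by (simp add: eP pq mult.assoc)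
    also have "\<dots> = e * pev a Y * pev p Y" by (simp add: eP)
    also have "\<dots> = pev a Y * (e * pev p Y)" by (rule ecomm)
    finally have qa: "e * pev q Y = 0" using p(2) by simp
    have q0: "q \<noteq> 0" using p pq by auto
    have "degree p = m + degree q"
      using pq q0 by (simp add: degree_mult_eq degree_power_eq L_def)
    then show ?thesis using pmin[OF q0 qa] m0 by simp
  next
    assume ue: "u = e"
    have "e * pev (L^m) Y = u * pev (L^m) Y" using ue by simp
    also have "\<dots> = e * pev (b * p) Y" by (simp add: u_def eP pq algebra_simps)
    also have "\<dots> = pev b Y * (e * pev p Y)" by (metis ecomm eP)
    finally show ?thesis using p(2) by simp
  qed
  have pL: "pev L Y = Y - emb lam" by (simp add: L_def emb_minus)
  have "e*y - scale lam e = e*(Y - emb lam)"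
    by (simp add: Y_def right_diff_distrib eR scale_emb emb_comm[of lam e] mult.assoc[symmetric] e_idem)
  then have "(e*y - scale lam e)^m = e*(Y - emb lam)^m"
    using m0 e_pow by (metis not0_implies_Suc)
  also have "\<dots> = 0" using Lm pL by simp
  finally show ?thesis by blast
qed

end


lemma geo_ring:
  fixes w :: "'a::ring_1"
  shows "(1 - w) * (\<Sum>i<n. w^i) = 1 - w^n \<and> (\<Sum>i<n. w^i) * (1 - w) = 1 - w^n"
proof (induct n)
  case (Suc n)
  have a: "(1 - w) * (\<Sum>i<Suc n. w^i) = (1 - w) * (\<Sum>i<n. w^i) + (1 - w) * w^n"
    by (simp add: distrib_left)
  have b: "(\<Sum>i<Suc n. w^i) * (1 - w) = (\<Sum>i<n. w^i) * (1 - w) + w^n * (1 - w)"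
    by (simp add: distrib_right)
  have c: "w * (\<Sum>i<n. w^i) = (\<Sum>i<n. w^i) * w"
    by (simp add: sum_distrib_left sum_distrib_right power_commutes)
  show ?case using Suc a b c by (simp add: algebra_simps power_commutes)
qed simp

context falg
begin
lemma scale_mult2: "scale a X * scale b Y = scale (a*b) (X*Y)"
  by (metis multL multR scale_scale)
lemma scale_pow: "(scale c w)^n = scale (c^n) (w^n)"
  by (induct n) (simp_all add: emb_def scale_mult2)
end

context corner
begin

definition NN where "NN = {w. e*w = w \<and> (\<exists>m. w^m = 0)}"
definition unitR where "unitR x \<longleftrightarrow> (\<exists>v. e*v = v \<and> v*x = e \<and> x*v = e)"

lemma e_scale: "e * scale c w = scale c (e * w)" by (simp add: multR)

lemma unit_e_minus:
  assumes w: "w \<in> NN" shows "unitR (e - w)"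
proof -
  obtain m where m: "w^m = 0" and ew: "e*w = w" using w by (auto simp: NN_def)
  define S where "S = (\<Sum>i<m. w^i)"
  have g: "(1 - w) * S = 1" "S * (1 - w) = 1" using geo_ring[of w m] m by (auto simp: S_def)
  have em: "e - w = e*(1 - w)" using ew by (simp add: right_diff_distrib)
  have "e*S*(e*(1-w)) = e*(S*(1-w))" by (metis ecomm eR mult.assoc)
  moreover have "e*(1-w)*(e*S) = e*((1-w)*S)" by (metis ecomm eR mult.assoc)
  ultimately show ?thesis unfolding unitR_def em using g eR by (intro exI[of _ "e*S"]) simp
qed

lemma no_left_inv:
  assumes w: "w \<in> NN" and v: "e*v = v" "v*w = e" shows False
proof -
  obtain m where m: "w^m = 0" and ew: "e*w = w" using w by (auto simp: NN_def)
  have ve: "v*e = v" using v e_cent by metis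
  have k: "v^(Suc k) * w^(Suc k) = e" for k
  proof (induct k)
    case (Suc k)
    have "v^(Suc (Suc k)) * w^(Suc (Suc k)) = v^(Suc k) * (v * w) * w^(Suc k)"
      by (simp only: power_Suc2[of v "Suc k"] power_Suc[of w "Suc k"] mult.assoc)
    also have "\<dots> = v^(Suc k) * w^(Suc k)"
      using ve v(2) by (metis mult.assoc power_Suc power_Suc2 power_commutes)
    finally show ?case using Suc by simp
  qed (use v in simp)
  show False
  proof (cases m)
    case 0 then show False using m by simp
  next
    case (Suc k) then show False using k[of k] m e_nz by simp
  qed
qed

lemma no_right_inv:
  assumes w: "w \<in> NN" and v: "e*v = v" "w*v = e" shows False
proof -
  obtain m where m: "w^m = 0" and ew: "e*w = w" using w by (auto simp: NN_def)
  have ve: "e*v = v" using v by metis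
  have k: "w^(Suc k) * v^(Suc k) = e" for k
  proof (induct k)
    case (Suc k)
    have "w^(Suc (Suc k)) * v^(Suc (Suc k)) = w^(Suc k) * (w * v) * v^(Suc k)"
      by (simp only: power_Suc2[of w "Suc k"] power_Suc[of v "Suc k"] mult.assoc)
    also have "\<dots> = w^(Suc k) * v^(Suc k)"
      using ve v(2) by (metis e_cent mult.assoc power_Suc power_Suc2 power_commutes)
    finally show ?case using Suc by simp
  qed (use v in simp)
  show False
  proof (cases m)
    case 0 then show False using m by simp
  next
    case (Suc k) then show False using k[of k] m e_nz by simp
  qed
qed

lemma NN_not_unit: "w \<in> NN \<Longrightarrow> \<not> unitR w"
  unfolding unitR_def using no_left_inv by blast

lemma NN_scale: "w \<in> NN \<Longrightarrow> scale c w \<in> NN"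
  unfolding NN_def by (auto simp: e_scale scale_pow intro: exI[of _ "Suc _"])

lemma NN_0: "0 \<in> NN" unfolding NN_def by (auto intro: exI[of _ 1])

lemma unit_shift:
  assumes a: "\<alpha> \<noteq> 0" and w: "w \<in> NN" shows "unitR (scale \<alpha> e + w)"
proof -
  define w' where "w' = scale (- inverse \<alpha>) w"
  have w': "w' \<in> NN" using w NN_scale w'_def by blast
  obtain v where v: "e*v = v" "v*(e - w') = e" "(e - w')*v = e"
    using unit_e_minus[OF w'] unfolding unitR_def by blast
  have x: "scale \<alpha> e + w = scale \<alpha> (e - w')"
    using a by (simp add: w'_def scale_right_diff_distrib scale_right_distrib)
  show ?thesis unfolding unitR_def x
  proof (intro exI[of _ "scale (inverse \<alpha>) v"] conjI)
    show "e * scale (inverse \<alpha>) v = scale (inverse \<alpha>) v" by (simp add: e_scale v)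
    show "scale (inverse \<alpha>) v * scale \<alpha> (e - w') = e" using a v by (simp add: scale_mult2)
    show "scale \<alpha> (e - w') * scale (inverse \<alpha>) v = e" using a v by (simp add: scale_mult2)
  qed
qed

lemma eR_NN: "e*(e*y - scale c e) = e*y - scale c e"
  by (simp add: right_diff_distrib eR e_scale e_idem)

definition lam where "lam y = (SOME c. e*y - scale c e \<in> NN)"

lemma lam_spec: "e*y - scale (lam y) e \<in> NN"
proof -
  obtain c m where "(e*y - scale c e)^m = 0" using eigen by blast
  then have "e*y - scale c e \<in> NN" using eR_NN unfolding NN_def by blast
  then show ?thesis unfolding lam_def by (rule someI)
qed

lemma NN_uniq:
  assumes "x - scale c e \<in> NN" "x - scale d e \<in> NN" shows "c = d"
proof (rule ccontr)
  assume "c \<noteq> d"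
  then have "d - c \<noteq> 0" by simp
  from unit_shift[OF this assms(2)]
  have "unitR (x - scale c e)" by (simp add: scale_left_diff_distrib algebra_simps)
  then show False using NN_not_unit assms(1) by blast
qed

lemma lam_uniq: "e*y - scale c e \<in> NN \<Longrightarrow> lam y = c"
  using NN_uniq lam_spec by blast

lemma decomp: "e*z = z \<Longrightarrow> z = scale (lam z) e + (z - scale (lam z) e) \<and> z - scale (lam z) e \<in> NN"
  using lam_spec[of z] by simp

lemma NN_mult_left:
  assumes w: "w \<in> NN" and r: "e*r = r" shows "r*w \<in> NN"
proof -
  have ew: "e*w = w" using w by (auto simp: NN_def)
  let ?z = "r*w"
  have ez: "e*?z = ?z" using r by (metis mult.assoc)
  show ?thesis
  proof (cases "lam ?z = 0")
    case True then show ?thesis using lam_spec[of ?z] ez by simp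
  next
    case False
    have "unitR ?z" using unit_shift[OF False, of "?z - scale (lam ?z) e"] decomp[OF ez] by simp
    then obtain v where v: "e*v = v" "v*?z = e" unfolding unitR_def by blast
    have "e*(v*r) = v*r" using v by (metis mult.assoc)
    moreover have "(v*r)*w = e" using v by (simp add: mult.assoc)
    ultimately show ?thesis using no_left_inv[OF w] by blast
  qed
qed

lemma NN_mult_right:
  assumes w: "w \<in> NN" and r: "e*r = r" shows "w*r \<in> NN"
proof -
  have ew: "e*w = w" using w by (auto simp: NN_def)
  let ?z = "w*r"
  have ez: "e*?z = ?z" using ew by (metis mult.assoc)
  show ?thesis
  proof (cases "lam ?z = 0")
    case True then show ?thesis using lam_spec[of ?z] ez by simp
  next
    case False
    have "unitR ?z" using unit_shift[OF False, of "?z - scale (lam ?z) e"] decomp[OF ez] by simp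
    then obtain v where v: "e*v = v" "?z*v = e" unfolding unitR_def by blast
    have "e*(r*v) = r*v" using v r by (metis mult.assoc)
    moreover have "w*(r*v) = e" using v by (simp add: mult.assoc)
    ultimately show ?thesis using no_right_inv[OF w] by blast
  qed
qed

lemma NN_add:
  assumes x: "x \<in> NN" and y: "y \<in> NN" shows "x + y \<in> NN"
proof -
  have ex: "e*x = x" and ey: "e*y = y" using x y by (auto simp: NN_def)
  let ?s = "x + y"
  have es: "e*?s = ?s" using ex ey by (simp add: distrib_left)
  show ?thesis
  proof (cases "lam ?s = 0")
    case True then show ?thesis using lam_spec[of ?s] es by simp
  next
    case False
    have "unitR ?s" using unit_shift[OF False, of "?s - scale (lam ?s) e"] decomp[OF es] by simp
    then obtain u where u: "e*u = u" "u*?s = e" unfolding unitR_def by blast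
    have ux: "u*x \<in> NN" using NN_mult_left[OF x u(1)] .
    have "u*y = e - u*x" using u(2) by (simp add: distrib_left algebra_simps)
    then have "unitR (u*y)" using unit_e_minus[OF ux] by simp
    then obtain v where v: "e*v = v" "v*(u*y) = e" unfolding unitR_def by blast
    have "e*(v*u) = v*u" using v by (metis mult.assoc)
    moreover have "(v*u)*y = e" using v by (simp add: mult.assoc)
    ultimately show ?thesis using no_left_inv[OF y] by blast
  qed
qed

lemma lam_add: "lam (x + y) = lam x + lam y"
proof (rule lam_uniq)
  have "e*(x+y) - scale (lam x + lam y) e = (e*x - scale (lam x) e) + (e*y - scale (lam y) e)"
    by (simp add: algebra_simps scale_left_distrib)
  then show "e*(x+y) - scale (lam x + lam y) e \<in> NN" using NN_add lam_spec by simp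
qed

lemma lam_scale: "lam (scale c x) = c * lam x"
proof (rule lam_uniq)
  have "e*(scale c x) - scale (c * lam x) e = scale c (e*x - scale (lam x) e)"
    by (simp add: e_scale scale_right_diff_distrib)
  then show "e*(scale c x) - scale (c * lam x) e \<in> NN" using NN_scale lam_spec by simp
qed

lemma lam_mult: "lam (x * y) = lam x * lam y"
proof (rule lam_uniq)
  define n1 where "n1 = e*x - scale (lam x) e"
  define n2 where "n2 = e*y - scale (lam y) e"
  have n1: "n1 \<in> NN" and n2: "n2 \<in> NN" using lam_spec n1_def n2_def by auto
  have en1: "e*n1 = n1" "n1*e = n1" using n1 e_cent by (auto simp: NN_def)
  have en2: "e*n2 = n2" using n2 by (auto simp: NN_def)
  have "e*(x*y) = (e*x)*(e*y)" by (metis ecomm eR mult.assoc)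
  also have "\<dots> = (scale (lam x) e + n1) * (scale (lam y) e + n2)" by (simp add: n1_def n2_def)
  also have "\<dots> = scale (lam x * lam y) e + (scale (lam x) n2 + scale (lam y) n1 + n1*n2)"
    by (simp add: algebra_simps scale_mult2 e_idem en1 en2 multL[symmetric] multR[symmetric])
  finally have "e*(x*y) - scale (lam x * lam y) e = scale (lam x) n2 + scale (lam y) n1 + n1*n2"
    by simp
  moreover have "n1*n2 \<in> NN" using NN_mult_left[OF n2 en1(1)] .
  ultimately show "e*(x*y) - scale (lam x * lam y) e \<in> NN"
    using NN_add NN_scale n1 n2 by simp
qed

lemma lam_e: "lam (scale c e) = c"
  by (rule lam_uniq) (simp add: e_scale e_idem NN_0)

lemma lam_1: "lam 1 = 1"
  by (rule lam_uniq) (simp add: NN_0)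

lemma lam_ker: "lam x = 0 \<Longrightarrow> \<exists>m. (e*x)^m = 0"
  using lam_spec[of x] by (simp add: NN_def)

end


context falg
begin

lemma grading_central:
  assumes ng: "\<not> has_nontrivial_grading scale" and ff: "f*f = (f::'a)"
  shows "f*x = x*f"
proof -
  define g where "g = 1 - f"
  have fg: "f*g = 0" "g*f = 0" "g*g = g" and fpg: "f + g = 1"
    using ff by (auto simp: g_def algebra_simps)
  have r1: "f*(f*z) = f*z" "g*(g*z) = g*z" "f*(g*z) = 0" "g*(f*z) = 0" for z
    using fg ff by (metis mult.assoc mult_zero_left)+
  define P where "P i x = (if i = 0 then f*x*f + g*x*g else if i = 1 then f*x*g
      else if i = -1 then g*x*f else 0)" for i :: int and x
  define V where "V i = {x. P i x = x}" for i
  have P_add: "P i (x + y) = P i x + P i y" for i x y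
    by (simp add: P_def algebra_simps)
  have P_0: "P i 0 = 0" for i by (simp add: P_def)
  have P_scale: "P i (scale c x) = scale c (P i x)" for i c x
    by (simp add: P_def multR[symmetric] multL[symmetric] scale_right_distrib)
  have P_sum: "finite S \<Longrightarrow> P j (\<Sum>i\<in>S. h i) = (\<Sum>i\<in>S. P j (h i))" for j S h
    by (induct S rule: finite_induct) (auto simp: P_0 P_add)
  have PP: "P j (P i z) = (if i = j then P i z else 0)" for i j z
    by (auto simp: P_def algebra_simps r1 fg ff)
  have Psum: "P (-1) x + P 0 x + P 1 x = x" for x
  proof -
    have "x = (f+g)*x*(f+g)" by (simp add: fpg)
    then show ?thesis by (simp add: P_def algebra_simps)
  qed
  have grad: "is_grading scale V"
    unfolding is_grading_def
  proof (intro conjI allI ballI)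
    fix i
    show "subspace (V i)"
      unfolding subspace_def V_def by (auto simp: P_0 P_add P_scale)
  next
    fix i j x y assume x: "x \<in> V i" and y: "y \<in> V j"
    then have xe: "x = P i x" and ye: "y = P j y" by (auto simp: V_def)
    have "P (i+j) (P i x * P j y) = P i x * P j y"
      unfolding P_def by (auto simp: algebra_simps r1 fg ff)
    then show "x * y \<in> V (i + j)" using xe ye by (simp add: V_def)
  next
    fix x
    let ?h = "\<lambda>i. P i x"
    have supp: "{i. ?h i \<noteq> 0} \<subseteq> {-1,0,1}" by (auto simp: P_def)
    show "\<exists>!h. finite {i. h i \<noteq> 0} \<and> (\<forall>i. h i \<in> V i) \<and> x = (\<Sum>i\<in>{i. h i \<noteq> 0}. h i)"
    proof (rule ex1I[of _ ?h], intro conjI allI)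
      show "finite {i. ?h i \<noteq> 0}" using supp finite_subset by blast
      show "?h i \<in> V i" for i by (simp add: V_def PP)
      have "(\<Sum>i\<in>{i. ?h i \<noteq> 0}. ?h i) = (\<Sum>i\<in>{-1,0,1}. ?h i)"
        by (rule sum.mono_neutral_left) (use supp in auto)
      also have "\<dots> = x" using Psum[of x] by (simp add: algebra_simps)
      finally show "x = (\<Sum>i\<in>{i. ?h i \<noteq> 0}. ?h i)" by simp
    next
      fix h assume h: "finite {i. h i \<noteq> 0} \<and> (\<forall>i. h i \<in> V i) \<and> x = (\<Sum>i\<in>{i. h i \<noteq> 0}. h i)"
      show "h = ?h"
      proof
        fix j
        let ?S = "{i. h i \<noteq> 0}"
        have hi: "h i = P i (h i)" for i using h by (auto simp: V_def)
        have "P j x = (\<Sum>i\<in>?S. P j (h i))" using h P_sum by auto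
        also have "\<dots> = (\<Sum>i\<in>?S. if i = j then h i else 0)"
          by (rule sum.cong) (auto simp: PP hi[symmetric] intro: sym, metis PP hi)
        also have "\<dots> = h j" using h by (auto simp: sum.delta)
        finally show "h j = P j x" by simp
      qed
    qed
  qed
  have V1: "V 1 = {0}" and Vm1: "V (-1) = {0}"
    using ng grad unfolding has_nontrivial_grading_def
    by (metis one_neq_zero, metis neg_equal_0_iff_equal one_neq_zero)
  have "f*x*g \<in> V 1" by (simp add: V_def P_def algebra_simps r1 fg ff)
  then have a: "f*x*g = 0" using V1 by auto
  have "g*x*f \<in> V (-1)" by (simp add: V_def P_def algebra_simps r1 fg ff)
  then have b: "g*x*f = 0" using Vm1 by auto
  have "f*x = f*x*(f+g)" by (simp add: fpg)
  also have "\<dots> = f*x*f" using a by (simp add: algebra_simps)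
  also have "\<dots> = (f+g)*x*f" using b by (simp add: algebra_simps)
  also have "\<dots> = x*f" by (simp add: fpg)
  finally show ?thesis .
qed

end


lemma pow_sum_orth:
  fixes a b :: "'a::ring_1"
  assumes "a*b = 0" "b*a = 0"
  shows "(a+b)^(Suc n) = a^(Suc n) + b^(Suc n)"
proof (induct n)
  case (Suc n)
  have "(a+b)^(Suc (Suc n)) = (a+b)*(a^(Suc n) + b^(Suc n))"
    using Suc by (simp only: power_Suc[of "a+b" "Suc n"])
  also have "\<dots> = a^(Suc (Suc n)) + b^(Suc (Suc n)) + a*b*b^n + b*a*a^n"
    by (simp add: algebra_simps)
  finally show ?case using assms by simp
qed simp

lemma pow_zero_ge: "(a::'a::ring_1)^m = 0 \<Longrightarrow> m \<le> k \<Longrightarrow> a^k = 0"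
  by (metis le_add_diff_inverse mult_zero_left power_add)

definition hom_k :: "('k::field \<Rightarrow> 'a::ring_1 \<Rightarrow> 'a) \<Rightarrow> ('a \<Rightarrow> 'k) \<Rightarrow> bool" where
  "hom_k scale \<phi> \<longleftrightarrow> (\<forall>x y. \<phi> (x + y) = \<phi> x + \<phi> y) \<and> (\<forall>c x. \<phi> (scale c x) = c * \<phi> x) \<and>
     (\<forall>x y. \<phi> (x * y) = \<phi> x * \<phi> y)"

lemma hom_k_0: "hom_k scale \<phi> \<Longrightarrow> \<phi> 0 = 0"
  unfolding hom_k_def by (metis add_0 add_cancel_right_right)

lemma hom_k_minus: "hom_k scale \<phi> \<Longrightarrow> \<phi> (x - y) = \<phi> x - \<phi> y"
  unfolding hom_k_def by (metis diff_add_cancel eq_diff_eq)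

context falg
begin

lemma subspace_range: "subspace (range (\<lambda>x. a*x))"
  unfolding subspace_def
  by (auto simp: image_iff) (metis mult_zero_right, metis distrib_left, metis multR)

lemma dim_lt:
  assumes "subspace S" "subspace T" "S \<subset> T" shows "dim S < dim T"
proof -
  obtain Bs where Bs: "independent Bs" "UNIV \<subseteq> span Bs"
    using basis_exists[of UNIV] by metis
  have fB: "finite Bs" using independent_span_bound[OF finB Bs(1)] spanB by auto
  interpret fd: finite_dimensional_vector_space scale Bs
    by unfold_locales (use Bs fB in auto)
  have "span S = S" "span T = T" using assms(1,2) span_eq_iff by blast+
  then show ?thesis using fd.dim_psubset[of S T] assms(3) by metis
qed

definition PP where
  "PP e \<longleftrightarrow> (\<exists>n (\<phi>::nat \<Rightarrow> 'a \<Rightarrow> 'k). (\<forall>i<n. hom_k scale (\<phi> i) \<and> \<phi> i e = 1) \<and>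
     (\<forall>c. \<exists>x. \<forall>i<n. \<phi> i x = c i) \<and> (\<forall>x. (\<forall>i<n. \<phi> i x = 0) \<longrightarrow> (\<exists>m. (e*x)^m = 0)))"

lemma main_ind:
  assumes ac: "alg_closed_field TYPE('k)"
    and cent: "\<And>f x. f*f = (f::'a) \<Longrightarrow> f*x = x*f"
  shows "e*e = e \<Longrightarrow> e \<noteq> 0 \<Longrightarrow> PP e"
proof (induction "dim (range (\<lambda>x. e*x))" arbitrary: e rule: less_induct)
  case less
  note ee = less.prems(1) and e0 = less.prems(2)
  show ?case
  proof (cases "\<exists>f. f*f = f \<and> e*f = f \<and> f \<noteq> 0 \<and> f \<noteq> e")
    case False
    have ce: "\<And>x. e*x = x*e" using cent[OF ee] by blast
    interpret C: corner scale B0 e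
      by (rule corner.intro[OF falg_axioms], rule corner_axioms.intro) (use ac ee e0 ce False in blast)+
    show ?thesis unfolding PP_def
    proof (rule exI[of _ "1::nat"], rule exI[of _ "\<lambda>i. C.lam"], (intro conjI; intro allI impI))
      show "hom_k scale C.lam \<and> C.lam e = 1" if "i < (1::nat)" for i
        using C.lam_e[of 1] by (simp add: hom_k_def C.lam_add C.lam_scale C.lam_mult)
      show "\<exists>x. \<forall>i<(1::nat). C.lam x = c i" for c :: "nat \<Rightarrow> 'k"
        using C.lam_e by (intro exI[of _ "scale (c 0) e"]) simp
      show "\<exists>m. (e*x)^m = 0" if "\<forall>i<(1::nat). C.lam x = 0" for x
        using that C.lam_ker by simp
    qed
  next
    case True
    then obtain f where f: "f*f = f" "e*f = f" "f \<noteq> 0" "f \<noteq> e" by blast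
    define g where "g = e - f"
    have fe: "f*e = f" using cent[OF f(1), of e] f(2) by simp
    have gg: "g*g = g" using ee f fe by (simp add: g_def algebra_simps)
    have eg: "e*g = g" using ee f by (simp add: g_def algebra_simps)
    have fg: "f*g = 0" "g*f = 0" using ee f fe by (auto simp: g_def algebra_simps)
    have g0: "g \<noteq> 0" using f g_def by auto
    have psub: "range (\<lambda>x. h*x) \<subset> range (\<lambda>x. e*x)" if h: "h*h = h" "e*h = h" "h \<noteq> e" for h
    proof
      show "range (\<lambda>x. h*x) \<subseteq> range (\<lambda>x. e*x)"
      proof
        fix z assume "z \<in> range (\<lambda>x. h*x)"
        then obtain x where z: "z = h*x" by auto
        have "z = e*(h*x)" using h(2) z by (simp add: mult.assoc[symmetric])
        then show "z \<in> range (\<lambda>x. e*x)" by blast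
      qed
      have "e \<notin> range (\<lambda>x. h*x)"
      proof
        assume "e \<in> range (\<lambda>x. h*x)"
        then obtain x where "e = h*x" by auto
        then have "h*e = e" using h(1) by (simp add: mult.assoc[symmetric])
        then show False using h cent[OF ee, of h] by simp
      qed
      moreover have "e \<in> range (\<lambda>x. e*x)" using ee by (metis rangeI)
      ultimately show "range (\<lambda>x. h*x) \<noteq> range (\<lambda>x. e*x)" by blast
    qed
    have gne: "g \<noteq> e" using f(3) g_def by auto
    have Pf: "PP f"
      using less.hyps[OF dim_lt[OF subspace_range subspace_range psub[OF f(1,2,4)]] f(1,3)] .
    have Pg: "PP g"
      using less.hyps[OF dim_lt[OF subspace_range subspace_range psub[OF gg eg gne]] gg g0] .
    obtain n1 \<phi>1 where h1: "\<forall>i<(n1::nat). hom_k scale (\<phi>1 i) \<and> \<phi>1 i f = 1"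
      and s1: "\<forall>c. \<exists>x. \<forall>i<n1. \<phi>1 i x = c i"
      and k1: "\<forall>x. (\<forall>i<n1. \<phi>1 i x = 0) \<longrightarrow> (\<exists>m. (f*x)^m = 0)"
      using Pf unfolding PP_def by auto
    obtain n2 \<phi>2 where h2: "\<forall>i<(n2::nat). hom_k scale (\<phi>2 i) \<and> \<phi>2 i g = 1"
      and s2: "\<forall>c. \<exists>x. \<forall>i<n2. \<phi>2 i x = c i"
      and k2: "\<forall>x. (\<forall>i<n2. \<phi>2 i x = 0) \<longrightarrow> (\<exists>m. (g*x)^m = 0)"
      using Pg unfolding PP_def by auto
    have hm: "hom_k scale \<phi> \<Longrightarrow> \<phi> (x*y) = \<phi> x * \<phi> y" for \<phi> :: "'a \<Rightarrow> 'k" and x y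
      by (simp add: hom_k_def)
    have ha: "hom_k scale \<phi> \<Longrightarrow> \<phi> (x+y) = \<phi> x + \<phi> y" for \<phi> :: "'a \<Rightarrow> 'k" and x y
      by (simp add: hom_k_def)
    have z1: "\<phi>1 i g = 0" "\<phi>1 i e = 1" if "i < n1" for i
    proof -
      have H: "hom_k scale (\<phi>1 i)" "\<phi>1 i f = 1" using h1 that by auto
      have "\<phi>1 i g = \<phi>1 i (f*g)" using hm[OF H(1), of f g] H(2) by simp
      then show "\<phi>1 i g = 0" using fg hom_k_0[OF H(1)] by simp
      have "\<phi>1 i e = \<phi>1 i (f*e)" using hm[OF H(1), of f e] H(2) by simp
      then show "\<phi>1 i e = 1" using fe H(2) by simp
    qed
    have z2: "\<phi>2 i f = 0" "\<phi>2 i e = 1" if "i < n2" for i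
    proof -
      have H: "hom_k scale (\<phi>2 i)" "\<phi>2 i g = 1" using h2 that by auto
      have "\<phi>2 i f = \<phi>2 i (g*f)" using hm[OF H(1), of g f] H(2) by simp
      then show "\<phi>2 i f = 0" using fg hom_k_0[OF H(1)] by simp
      have ge: "g*e = g" using eg cent[OF ee, of g] by simp
      have "\<phi>2 i e = \<phi>2 i (g*e)" using hm[OF H(1), of g e] H(2) by simp
      then show "\<phi>2 i e = 1" using ge H(2) by simp
    qed
    define \<phi> where "\<phi> i = (if i < n1 then \<phi>1 i else \<phi>2 (i - n1))" for i
    show ?thesis unfolding PP_def
    proof (rule exI[of _ "n1 + n2"], rule exI[of _ \<phi>], (intro conjI; intro allI impI))
      fix i assume i: "i < n1 + n2"
      show "hom_k scale (\<phi> i) \<and> \<phi> i e = 1"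
      proof (cases "i < n1")
        case True then show ?thesis using h1 z1(2)[OF True] by (simp add: \<phi>_def)
      next
        case False
        then have j: "i - n1 < n2" using i by simp
        then show ?thesis using h2 z2(2)[OF j] False by (simp add: \<phi>_def)
      qed
    next
      fix c :: "nat \<Rightarrow> 'k"
      obtain x1 where x1: "\<forall>i<n1. \<phi>1 i x1 = c i" using s1 by blast
      obtain x2 where x2: "\<forall>i<n2. \<phi>2 i x2 = c (i + n1)" using spec[OF s2, of "\<lambda>i. c (i + n1)"] by blast
      show "\<exists>x. \<forall>i<n1 + n2. \<phi> i x = c i"
      proof (intro exI[of _ "f*x1 + g*x2"] allI impI)
        fix i assume i: "i < n1 + n2"
        show "\<phi> i (f*x1 + g*x2) = c i"
        proof (cases "i < n1")
          case True
          have H: "hom_k scale (\<phi>1 i)" "\<phi>1 i f = 1" using h1 True by auto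
          have "\<phi>1 i (f*x1 + g*x2) = \<phi>1 i f * \<phi>1 i x1 + \<phi>1 i g * \<phi>1 i x2"
            using ha[OF H(1)] hm[OF H(1)] by simp
          then show ?thesis using H(2) z1(1)[OF True] x1 True by (simp add: \<phi>_def)
        next
          case False
          then have j: "i - n1 < n2" using i by simp
          have H: "hom_k scale (\<phi>2 (i-n1))" "\<phi>2 (i-n1) g = 1" using h2 j by auto
          have "\<phi>2 (i-n1) (f*x1 + g*x2) = \<phi>2 (i-n1) f * \<phi>2 (i-n1) x1 + \<phi>2 (i-n1) g * \<phi>2 (i-n1) x2"
            using ha[OF H(1)] hm[OF H(1)] by simp
          then show ?thesis using H(2) z2(1)[OF j] x2 j False by (simp add: \<phi>_def)
        qed
      qed
    next
      fix x assume K: "\<forall>i<n1 + n2. \<phi> i x = 0"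
      have "\<forall>i<n1. \<phi>1 i x = 0"
      proof (intro allI impI)
        fix i assume "i < n1"
        then show "\<phi>1 i x = 0" using K[rule_format, of i] by (simp add: \<phi>_def)
      qed
      then obtain m1 where m1: "(f*x)^m1 = 0" using k1 by blast
      have "\<forall>i<n2. \<phi>2 i x = 0"
      proof (intro allI impI)
        fix i assume "i < n2"
        then show "\<phi>2 i x = 0" using K[rule_format, of "i + n1"] by (simp add: \<phi>_def)
      qed
      then obtain m2 where m2: "(g*x)^m2 = 0" using k2 by blast
      have ex: "e*x = f*x + g*x" by (simp add: g_def algebra_simps)
      have o1: "(f*x)*(g*x) = 0"
      proof -
        have "(f*x)*(g*x) = f*(x*g)*x" by (simp add: mult.assoc)
        also have "\<dots> = (f*g)*(x*x)" using cent[OF gg, of x, symmetric] by (simp add: mult.assoc)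
        finally show ?thesis using fg by simp
      qed
      have o2: "(g*x)*(f*x) = 0"
      proof -
        have "(g*x)*(f*x) = g*(x*f)*x" by (simp add: mult.assoc)
        also have "\<dots> = (g*f)*(x*x)" using cent[OF f(1), of x, symmetric] by (simp add: mult.assoc)
        finally show ?thesis using fg by simp
      qed
      have "(e*x)^(Suc (m1+m2)) = (f*x)^(Suc (m1+m2)) + (g*x)^(Suc (m1+m2))"
        using pow_sum_orth[OF o1 o2] ex by simp
      also have "\<dots> = 0" using pow_zero_ge[OF m1] pow_zero_ge[OF m2] by simp
      finally show "\<exists>m. (e*x)^m = 0" by blast
    qed
  qed
qed

end


theorem mainTheorem1:
  fixes scale :: "'k::field \<Rightarrow> 'a::ring_1 \<Rightarrow> 'a"
  assumes "alg_closed_field TYPE('k)"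
    and "fin_dim_k_algebra scale"
    and "\<not> has_nontrivial_grading scale"
  shows "basic_algebra scale"
proof -
  have vs: "vector_space scale" and ml: "\<And>c x y. scale c (x * y) = scale c x * y"
    and mr: "\<And>c x y. scale c (x * y) = x * scale c y"
    using assms(2) unfolding fin_dim_k_algebra_def k_algebra_def by blast+
  obtain B where B: "finite B" "module.span scale B = UNIV"
    using assms(2) unfolding fin_dim_k_algebra_def by auto
  interpret F: falg scale B
    by (rule falg.intro[OF vs], rule falg_axioms.intro) (use ml mr B in blast)+
  have cent: "\<And>f x. f*f = (f::'a) \<Longrightarrow> f*x = x*f"
    using F.grading_central[OF assms(3)] by blast
  have "F.PP 1" using F.main_ind[OF assms(1) cent, of 1] by simp
  then obtain n and \<phi> :: "nat \<Rightarrow> 'a \<Rightarrow> 'k" where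
    h: "\<forall>i<n. hom_k scale (\<phi> i) \<and> \<phi> i 1 = 1"
    and s: "\<forall>c. \<exists>x. \<forall>i<n. \<phi> i x = c i"
    and k: "\<forall>x. (\<forall>i<n. \<phi> i x = 0) \<longrightarrow> (\<exists>m. x^m = 0)"
    unfolding F.PP_def by auto
  have hm: "\<phi> i (x*y) = \<phi> i x * \<phi> i y" "\<phi> i (x+y) = \<phi> i x + \<phi> i y"
    "\<phi> i (scale c x) = c * \<phi> i x" "\<phi> i 1 = 1" "\<phi> i 0 = 0"
    "\<phi> i (x - y) = \<phi> i x - \<phi> i y" if i: "i < n" for i x y c
  proof -
    have H: "hom_k scale (\<phi> i)" "\<phi> i 1 = 1" using h i by auto
    have H0: "\<phi> i 0 = 0" "\<phi> i (x - y) = \<phi> i x - \<phi> i y"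
      using hom_k_0[OF H(1)] hom_k_minus[OF H(1)] by auto
    show "\<phi> i (x*y) = \<phi> i x * \<phi> i y" "\<phi> i (x+y) = \<phi> i x + \<phi> i y"
      "\<phi> i (scale c x) = c * \<phi> i x" "\<phi> i 1 = 1" "\<phi> i 0 = 0"
      "\<phi> i (x - y) = \<phi> i x - \<phi> i y"
      using H(1) unfolding hom_k_def by (simp_all add: H(2) H0)
  qed
  have K_nil: "\<exists>m. x^m = 0" if "\<forall>i<n. \<phi> i x = 0" for x using k that by blast
  define K where "K = {x. \<forall>i<n. \<phi> i x = 0}"
  have "K = jacobson_radical"
  proof
    show "K \<subseteq> jacobson_radical"
    proof
      fix x assume xK: "x \<in> K"
      show "x \<in> jacobson_radical" unfolding jacobson_radical_def
      proof
        fix I :: "'a set" assume "I \<in> {I. maximal_left_ideal I}"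
        then have I: "left_ideal I" "I \<noteq> UNIV"
          and mx: "\<And>L. left_ideal L \<Longrightarrow> I \<subseteq> L \<Longrightarrow> L \<noteq> UNIV \<Longrightarrow> L = I"
          unfolding maximal_left_ideal_def by auto
        show "x \<in> I"
        proof (rule ccontr)
          assume xI: "x \<notin> I"
          define L where "L = {i + a*x | i a. i \<in> I}"
          have I0: "0 \<in> I" and Iadd: "\<And>u v. u \<in> I \<Longrightarrow> v \<in> I \<Longrightarrow> u + v \<in> I"
            and Imul: "\<And>r u. u \<in> I \<Longrightarrow> r * u \<in> I"
            using I(1) unfolding left_ideal_def by blast+
          have memL: "i + a*x \<in> L" if "i \<in> I" for i a unfolding L_def using that by blast
          have lL: "left_ideal L" unfolding left_ideal_def
          proof (intro conjI ballI allI)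
            have "0 = 0 + 0*x" by simp
            then show "0 \<in> L" using memL[OF I0, of 0] by simp
            fix u v assume "u \<in> L" "v \<in> L"
            then obtain i1 a1 i2 a2 where uv: "u = i1 + a1*x" "v = i2 + a2*x" "i1 \<in> I" "i2 \<in> I"
              unfolding L_def by auto
            have "u + v = (i1 + i2) + (a1 + a2)*x" using uv by (simp add: algebra_simps)
            then show "u + v \<in> L" using memL[OF Iadd[OF uv(3,4)]] by simp
          next
            fix r u assume "u \<in> L"
            then obtain i1 a1 where uv: "u = i1 + a1*x" "i1 \<in> I" unfolding L_def by auto
            have "r * u = r*i1 + (r*a1)*x" using uv by (simp add: algebra_simps)
            then show "r * u \<in> L" using memL[OF Imul[OF uv(2)]] by simp
          qed
          have IL: "I \<subseteq> L" using memL[of _ 0] by auto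
          have xL: "x \<in> L" using memL[OF I0, of 1] by simp
          have "L = UNIV" using mx[OF lL IL] xL xI by blast
          then have "1 \<in> L" by simp
          then obtain i a where ia: "1 = i + a*x" "i \<in> I" unfolding L_def by blast
          have "a*x \<in> K" using xK hm unfolding K_def by simp
          then obtain m where m: "(a*x)^m = 0" using K_nil unfolding K_def by blast
          have "(\<Sum>j<m. (a*x)^j) * i = 1"
          proof -
            have "i = 1 - a*x" using ia(1) by (simp add: eq_diff_eq)
            then show ?thesis using geo_ring[of "a*x" m] m by simp
          qed
          moreover have "(\<Sum>j<m. (a*x)^j) * i \<in> I" using I(1) ia(2) unfolding left_ideal_def by blast
          ultimately have "1 \<in> I" by simp
          then have "\<forall>y. y \<in> I" using I(1) unfolding left_ideal_def by (metis mult.right_neutral)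
          then show False using I(2) by blast
        qed
      qed
    qed
  next
    show "jacobson_radical \<subseteq> K"
    proof
      fix x :: 'a assume xJ: "x \<in> jacobson_radical"
      show "x \<in> K" unfolding K_def
      proof (intro CollectI allI impI)
        fix i assume i: "i < n"
        define I where "I = {y. \<phi> i y = 0}"
        have lI: "left_ideal I" unfolding left_ideal_def I_def using hm[OF i] by auto
        have I1: "I \<noteq> UNIV" unfolding I_def using hm(4)[OF i] by (metis (mono_tags) CollectD UNIV_I one_neq_zero)
        have "maximal_left_ideal I" unfolding maximal_left_ideal_def
        proof (intro conjI lI I1 allI impI)
          fix L assume L: "left_ideal L \<and> I \<subseteq> L \<and> L \<noteq> UNIV"
          show "L = I"
          proof (rule ccontr)
            assume "L \<noteq> I"
            then obtain y where y: "y \<in> L" "y \<notin> I" using L by blast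
            define c where "c = \<phi> i y"
            have c0: "c \<noteq> 0" using y unfolding c_def I_def by simp
            have "1 - scale (inverse c) y \<in> I" unfolding I_def using hm[OF i] c0 c_def by simp
            then have a: "1 - scale (inverse c) y \<in> L" using L by blast
            have "scale (inverse c) y = scale (inverse c) 1 * y" using ml[of _ 1 y] by simp
            then have b: "scale (inverse c) y \<in> L" using L y unfolding left_ideal_def by metis
            have "1 \<in> L" using a b L unfolding left_ideal_def by (metis diff_add_cancel)
            then have "\<forall>z. z \<in> L" using L unfolding left_ideal_def by (metis mult.right_neutral)
            then show False using L by blast
          qed
        qed
        then show "\<phi> i x = 0" using xJ unfolding jacobson_radical_def I_def by blast
      qed
    qed
  qed
  show ?thesis unfolding basic_algebra_def
  proof (rule exI[of _ n], rule exI[of _ \<phi>], intro conjI)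
    show "\<forall>i<n. k_algebra_hom_to_field scale (\<phi> i)"
      unfolding k_algebra_hom_to_field_def using hm by auto
    show "\<forall>c. \<exists>x. \<forall>i<n. \<phi> i x = c i" using s .
    show "{x. \<forall>i<n. \<phi> i x = 0} = jacobson_radical" using \<open>K = jacobson_radical\<close> K_def by simp
  qed
qed


end
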